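(* Let $q\ge2$ be an integer and $p$ a prime not dividing $q$. For every finite field $F$ of characteristic $p$ and every positive integer $d$, every $d$-dimensional VLNC solution over $F$ of the Char-$q$-$s$ network has $s$-coefficient matrix $A_1=0$ on $e_1$.
   Context: Vector linear network coding: each source $v$ generates $x_v\in F^d$; an edge out of a source $v$ carries $Ax_v$ for a $d\times d$ matrix $A$ over $F$; an edge out of an intermediate node carries $\sum A_{e',e}y_{e'}$ over the edges $e'$ entering that node; a terminal computes vectors $\sum B_ey_e$ over its incoming edges; a $d$-dimensional VLNC solution over $F$ is such a code with which every terminal computes each demanded message for all message choices. The Char-$q$-$s$ network (integer $q\ge2$): sources $s,x_1,\dots,x_{q+2}$; intermediate nodes $m_1,\dots,m_{q+3},n_1,\dots,n_{q+3}$; terminals $r_1,\dots,r_{q+3}$; edges: $(x_1,m_i)$ for $1\le i\le q+1$; $(s,m_1)$ and $(s,m_i)$ for $4\le i\le q+3$; $(x_i,m_j)$ for $2\le i,j\le q+2$, $i\ne j$; $(x_i,m_{q+3})$ for $1\le i\le q+2$; $e_i=(m_i,n_i)$ for $1\le i\le q+3$; $(n_i,r_i)$ for $1\le i\le q+2$; $(n_{q+3},r_i)$ and $(n_i,r_{q+3})$ for $1\le i\le q+2$; $(x_i,r_1)$ for $2\le i\le q+1$; $(x_1,r_{q+2})$; $(s,r_2)$; $(s,r_3)$. Demands: $r_1$ demands $x_{q+2}$; $r_i$ demands $x_i$ for $2\le i\le q+2$; $r_{q+3}$ demands $x_1$; no terminal demands $s$. In any $d$-dimensional VLNC over $F$ the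 vector on $e_1$ has the form $y_{e_1}=M_1x_1+A_1s$ with $d\times d$ matrices $M_1,A_1$; $A_1$ is called the $s$-coefficient matrix on $e_1$. *)

theory Defs
  imports "HOL-Analysis.Analysis"
begin

datatype node = S | X nat | M nat | N nat | R nat

type_synonym edge = "node \<times> node"

definition sources :: "nat \<Rightarrow> node set" where
  "sources q = {S} \<union> {X i | i. 1 \<le> i \<and> i \<le> q + 2}"

definition intermediates :: "nat \<Rightarrow> node set" where
  "intermediates q = {M i | i. 1 \<le> i \<and> i \<le> q + 3} \<union> {N i | i. 1 \<le> i \<and> i \<le> q + 3}"

definition terminals :: "nat \<Rightarrow> node set" where
  "terminals q = {R i | i. 1 \<le> i \<and> i \<le> q + 3}"

definition edges :: "nat \<Rightarrow> edge set" where
  "edges q =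
     {(X 1, M i) | i. 1 \<le> i \<and> i \<le> q + 1}
   \<union> {(S, M 1)} \<union> {(S, M i) | i. 4 \<le> i \<and> i \<le> q + 3}
   \<union> {(X i, M j) | i j. 2 \<le> i \<and> i \<le> q + 2 \<and> 2 \<le> j \<and> j \<le> q + 2 \<and> i \<noteq> j}
   \<union> {(X i, M (q + 3)) | i. 1 \<le> i \<and> i \<le> q + 2}
   \<union> {(M i, N i) | i. 1 \<le> i \<and> i \<le> q + 3}
   \<union> {(N i, R i) | i. 1 \<le> i \<and> i \<le> q + 2}
   \<union> {(N (q + 3), R i) | i. 1 \<le> i \<and> i \<le> q + 2}
   \<union> {(N i, R (q + 3)) | i. 1 \<le> i \<and> i \<le> q + 2}
   \<union> {(X i, R 1) | i. 2 \<le> i \<and> i \<le> q + 1}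
   \<union> {(X 1, R (q + 2)), (S, R 2), (S, R 3)}"

definition demands :: "nat \<Rightarrow> (node \<times> node) set" where
  "demands q = {(R 1, X (q + 2))} \<union> {(R i, X i) | i. 2 \<le> i \<and> i \<le> q + 2}
              \<union> {(R (q + 3), X 1)}"

definition in_edges :: "nat \<Rightarrow> node \<Rightarrow> edge set" where
  "in_edges q v = {e \<in> edges q. snd e = v}"

text \<open>A d-dimensional VLNC over the field 'a is given by
  K e   : the d x d matrix on an edge e out of a source (edge carries K e *v x_source),
  A e' e: the local coding matrix from edge e' into an intermediate node to an edge e out of it,
  B t v e: the decoding matrix of terminal t for demanded message v on incoming edge e.
  The dimension d is CARD('n).  A message choice is a map x from nodes to F^d
  (only values at sources matter).  y is the family of edge vectors; it is consistent
  with the code and x if it obeys the coding equations (the network is acyclic, so the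
  consistent y exists and is unique).\<close>

definition consistent ::
  "nat \<Rightarrow> (edge \<Rightarrow> 'a::comm_ring_1^'n^'n) \<Rightarrow> (edge \<Rightarrow> edge \<Rightarrow> 'a^'n^'n)
   \<Rightarrow> (node \<Rightarrow> 'a^'n) \<Rightarrow> (edge \<Rightarrow> 'a^'n) \<Rightarrow> bool" where
  "consistent q K A x y \<longleftrightarrow>
     (\<forall>e \<in> edges q.
        (fst e \<in> sources q \<longrightarrow> y e = K e *v x (fst e)) \<and>
        (fst e \<in> intermediates q \<longrightarrow> y e = (\<Sum>e' \<in> in_edges q (fst e). A e' e *v y e')))"

definition is_VLNC_solution ::
  "nat \<Rightarrow> (edge \<Rightarrow> 'a::comm_ring_1^'n^'n) \<Rightarrow> (edge \<Rightarrow> edge \<Rightarrow> 'a^'n^'n)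
   \<Rightarrow> (node \<Rightarrow> node \<Rightarrow> edge \<Rightarrow> 'a^'n^'n) \<Rightarrow> bool" where
  "is_VLNC_solution q K A B \<longleftrightarrow>
     (\<forall>x y. consistent q K A x y \<longrightarrow>
        (\<forall>(t, v) \<in> demands q. (\<Sum>e \<in> in_edges q t. B t v e *v y e) = x v))"

text \<open>The vector on e_1 = (m_1, n_1) is
  y_{e_1} = A_{(x_1,m_1),e_1} K_{(x_1,m_1)} x_1 + A_{(s,m_1),e_1} K_{(s,m_1)} s,
  so the s-coefficient matrix on e_1 is the following product.\<close>

definition s_coeff_e1 ::
  "(edge \<Rightarrow> 'a::comm_ring_1^'n^'n) \<Rightarrow> (edge \<Rightarrow> edge \<Rightarrow> 'a^'n^'n) \<Rightarrow> 'a^'n^'n" where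
  "s_coeff_e1 K A = A (S, M 1) (M 1, N 1) ** K (S, M 1)"

end

theory Submission imports Defs begin
lemma into_M: "(a, M j) \<in> edges q \<Longrightarrow> a \<in> sources q"
  by (auto simp: edges_def sources_def)
lemma into_N: "(a, N j) \<in> edges q \<Longrightarrow> a = M j"
  by (auto simp: edges_def)
lemma M_not_src: "M j \<notin> sources q" "N j \<notin> sources q"
  by (auto simp: sources_def)
lemma in_N: "1 \<le> j \<Longrightarrow> j \<le> q+3 \<Longrightarrow> in_edges q (N j) = {(M j, N j)}"
  by (auto simp: in_edges_def edges_def)
lemma in_M1: "in_edges q (M 1) = {(X 1, M 1), (S, M 1)}"
  by (auto simp: in_edges_def edges_def)
lemma in_Rj: "2 \<le> q \<Longrightarrow> 2 \<le> j \<Longrightarrow> j \<le> q+2 \<Longrightarrow> in_edges q (R j) = {(N j, R j), (N(q+3), R j)}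
   \<union> (if j = 2 \<or> j = 3 then {(S, R j)} else {}) \<union> (if j = q+2 then {(X 1, R j)} else {})"
  by (auto simp: in_edges_def edges_def)
lemma in_Rlast: "2 \<le> q \<Longrightarrow> in_edges q (R (q+3)) = (\<lambda>i. (N i, R(q+3))) ` {1..q+2}"
  by (auto simp: in_edges_def edges_def)
lemma feeders: "2 \<le> j \<Longrightarrow> (X j, M j) \<notin> edges q"
  "(S, M 2) \<notin> edges q" "(S, M 3) \<notin> edges q" "(X 1, M (q+2)) \<notin> edges q"
  "2 \<le> k \<Longrightarrow> (X k, M 1) \<notin> edges q"
  by (auto simp: edges_def)
lemma dem: "2 \<le> j \<Longrightarrow> j \<le> q+2 \<Longrightarrow> (R j, X j) \<in> demands q" "(R (q+3), X 1) \<in> demands q"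
  by (auto simp: demands_def)
lemma sq_surj_inj:
  fixes X :: "'a::field^'n^'n"
  assumes "\<And>w. \<exists>v. X *v v = w"
  shows "X *v v = 0 \<Longrightarrow> v = 0"
proof -
  have "surj ((*v) X)" using assms by (metis surjI)
  then obtain Y where "X ** Y = mat 1" using matrix_right_invertible_surjective by blast
  then have "Y ** X = mat 1" using matrix_left_right_inverse by blast
  then show "X *v v = 0 \<Longrightarrow> v = 0"
    by (metis matrix_vector_mul_assoc matrix_vector_mul_lid matrix_vector_mult_0_right)
qed

lemma char_arg:
  fixes \<eta> :: "nat \<Rightarrow> 'a::field"
  assumes fin: "finite I" and cI: "card I = Suc q" and q0: "of_nat q \<noteq> (0::'a)"
    and h: "\<And>k. k \<in> I \<Longrightarrow> (\<Sum>i\<in>I-{k}. \<eta> i) = 0"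
    and k: "k \<in> I"
  shows "\<eta> k = 0"
proof -
  define H where "H = (\<Sum>i\<in>I. \<eta> i)"
  have e: "\<eta> j = H" if "j \<in> I" for j
    using h[OF that] sum_diff1[OF fin, of \<eta> j] that unfolding H_def by simp
  have "H = (\<Sum>i\<in>I. H)" unfolding H_def[symmetric] using e by (metis H_def sum.cong)
  also have "\<dots> = of_nat (Suc q) * H" using cI by simp
  finally have "of_nat q * H = 0" by (simp add: algebra_simps)
  then have "H = 0" using q0 by simp
  then show ?thesis using e k by simp
qed

definition ee :: "node \<Rightarrow> 'a::zero \<Rightarrow> node \<Rightarrow> 'a" where
  "ee v b = (\<lambda>n. if n = v then b else 0)"

definition ye :: "nat \<Rightarrow> (edge \<Rightarrow> 'a::comm_ring_1^'n^'n) \<Rightarrow> (edge \<Rightarrow> edge \<Rightarrow> 'a^'n^'n)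
   \<Rightarrow> nat \<Rightarrow> (node \<Rightarrow> 'a^'n) \<Rightarrow> 'a^'n" where
  "ye q K A j x = (\<Sum>e'\<in>in_edges q (M j). A e' (M j, N j) *v (K e' *v x (fst e')))"

definition YY :: "nat \<Rightarrow> (edge \<Rightarrow> 'a::comm_ring_1^'n^'n) \<Rightarrow> (edge \<Rightarrow> edge \<Rightarrow> 'a^'n^'n)
   \<Rightarrow> (node \<Rightarrow> 'a^'n) \<Rightarrow> edge \<Rightarrow> 'a^'n" where
  "YY q K A x e = (if fst e \<in> sources q then K e *v x (fst e)
     else (case fst e of M j \<Rightarrow> (\<Sum>e'\<in>in_edges q (M j). A e' e *v (K e' *v x (fst e')))
       | N j \<Rightarrow> A (M j, N j) e *v ye q K A j x | _ \<Rightarrow> 0))"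


lemma YY_consistent: "consistent q K A x (YY q K A x)"
  unfolding consistent_def
proof (intro ballI conjI impI)
  fix e assume "e \<in> edges q" "fst e \<in> sources q"
  then show "YY q K A x e = K e *v x (fst e)" by (simp add: YY_def)
next
  fix e assume e: "e \<in> edges q" "fst e \<in> intermediates q"
  then obtain j where j: "fst e = M j \<or> (fst e = N j \<and> 1 \<le> j \<and> j \<le> q+3)"
    unfolding intermediates_def by blast
  show "YY q K A x e = (\<Sum>e'\<in>in_edges q (fst e). A e' e *v YY q K A x e')"
  proof (cases "fst e = M j")
    case True
    have "\<And>e'. e' \<in> in_edges q (M j) \<Longrightarrow> YY q K A x e' = K e' *v x (fst e')"
    proof -
      fix e' assume "e' \<in> in_edges q (M j)"
      then have "(fst e', M j) \<in> edges q" unfolding in_edges_def by (cases e') auto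
      then have "fst e' \<in> sources q" by (rule into_M)
      then show "YY q K A x e' = K e' *v x (fst e')" unfolding YY_def by simp
    qed
    then have "(\<Sum>e'\<in>in_edges q (fst e). A e' e *v YY q K A x e') = 
       (\<Sum>e'\<in>in_edges q (M j). A e' e *v (K e' *v x (fst e')))"
      using True by (intro sum.cong) auto
    moreover have "YY q K A x e = (\<Sum>e'\<in>in_edges q (M j). A e' e *v (K e' *v x (fst e')))"
      using True M_not_src(1)[of j q] unfolding YY_def by simp
    ultimately show ?thesis by simp
  next
    case False
    then have f: "fst e = N j" "1 \<le> j" "j \<le> q+3" using j by auto
    have "YY q K A x (M j, N j) = ye q K A j x" using M_not_src(1)[of j q] unfolding YY_def ye_def by simp
    moreover have "YY q K A x e = A (M j, N j) e *v ye q K A j x" using f M_not_src(2)[of j q] unfolding YY_def by simp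
    ultimately show ?thesis using f by (simp add: in_N)
  qed
qed

lemma ye_feed:
  assumes "\<And>a. (a, M j) \<in> edges q \<Longrightarrow> x a = x' a"
  shows "ye q K A j x = ye q K A j x'"
  unfolding ye_def using assms by (auto simp: in_edges_def intro!: sum.cong)

lemma ye_diff: "ye q K A j (\<lambda>n. x n - x' n) = ye q K A j x - ye q K A j x'"
  unfolding ye_def by (simp add: matrix_vector_mult_diff_distrib sum_subtractf)

lemma ye_zero: "ye q K A j (\<lambda>n. 0) = 0"
  unfolding ye_def by simp


lemma src: "S \<in> sources q" "X 1 \<in> sources q"
  by (auto simp: sources_def)

context
  fixes q :: nat and K :: "edge \<Rightarrow> 'a::field^'n^'n" and A :: "edge \<Rightarrow> edge \<Rightarrow> 'a^'n^'n"
    and B :: "node \<Rightarrow> node \<Rightarrow> edge \<Rightarrow> 'a^'n^'n"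
  assumes q2: "2 \<le> q" and sol: "is_VLNC_solution q K A B" and charq: "of_nat q \<noteq> (0::'a)"
begin

abbreviation "yy j x \<equiv> ye q K A j x"

definition "Um j = B (R j) (X j) (N j, R j) ** A (M j, N j) (N j, R j)"
definition "Vm j = B (R j) (X j) (N (q+3), R j) ** A (M (q+3), N (q+3)) (N (q+3), R j)"
definition "Wm i = B (R (q+3)) (X 1) (N i, R (q+3)) ** A (M i, N i) (N i, R (q+3))"

lemma decode: "(t,v) \<in> demands q \<Longrightarrow> (\<Sum>e\<in>in_edges q t. B t v e *v YY q K A x e) = x v"
  using sol YY_consistent[of q K A x] unfolding is_VLNC_solution_def by blast

lemma YY_N: "YY q K A x (N j, t) = A (M j, N j) (N j, t) *v yy j x"
  using M_not_src(2)[of j q] unfolding YY_def by simp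

lemma YY_S: "YY q K A x (S, t) = K (S, t) *v x S"
  using src unfolding YY_def by simp

lemma YY_X1: "YY q K A x (X 1, t) = K (X 1, t) *v x (X 1)"
  using src unfolding YY_def by simp

lemma YY_X1': "YY q K A x (X (Suc 0), t) = K (X (Suc 0), t) *v x (X (Suc 0))"
  using YY_X1 by simp

lemma Dj:
  assumes j: "2 \<le> j" "j \<le> q+2" and s: "j = 2 \<or> j = 3 \<Longrightarrow> x S = 0"
    and x1: "j = q+2 \<Longrightarrow> x (X 1) = 0"
  shows "x (X j) = Um j *v yy j x + Vm j *v yy (q+3) x"
proof -
  have "x (X j) = (\<Sum>e\<in>in_edges q (R j). B (R j) (X j) e *v YY q K A x e)"
    using decode[OF dem(1)[OF j]] by simp
  also have "\<dots> = Um j *v yy j x + Vm j *v yy (q+3) x"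
  proof (cases "j = 2 \<or> j = 3")
    case True
    then have "j \<noteq> q+2" using q2 by auto
    then show ?thesis using True j s q2 unfolding in_Rj[OF q2 j]
      by (auto simp: YY_N YY_S Um_def Vm_def matrix_vector_mul_assoc)
  next
    case False
    show ?thesis
    proof (cases "j = q+2")
      case True
      then show ?thesis using False j x1 q2 unfolding in_Rj[OF q2 j]
        by (auto simp: YY_N YY_X1 YY_X1' Um_def Vm_def matrix_vector_mul_assoc)
    next
      case False2: False
      then show ?thesis using False j q2 unfolding in_Rj[OF q2 j]
        by (auto simp: YY_N Um_def Vm_def matrix_vector_mul_assoc)
    qed
  qed
  finally show ?thesis .
qed

lemma D0: "x (X 1) = (\<Sum>i\<in>{1..q+2}. Wm i *v yy i x)"
proof -
  have "x (X 1) = (\<Sum>e\<in>in_edges q (R (q+3)). B (R (q+3)) (X 1) e *v YY q K A x e)"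
    using decode[OF dem(2)] by simp
  also have "\<dots> = (\<Sum>i\<in>{1..q+2}. Wm i *v yy i x)"
    unfolding in_Rlast[OF q2]
    by (subst sum.reindex) (auto simp: inj_on_def YY_N Wm_def matrix_vector_mul_assoc)
  finally show ?thesis .
qed

lemma yy_ee_self: "2 \<le> j \<Longrightarrow> yy j (ee (X j) b) = 0"
proof -
  assume j: "2 \<le> j"
  have "yy j (ee (X j) b) = yy j (\<lambda>n. 0)"
    by (rule ye_feed) (use feeders(1)[OF j, of q] in \<open>auto simp: ee_def\<close>)
  then show ?thesis by (simp add: ye_zero)
qed

lemma Vsig: "2 \<le> j \<Longrightarrow> j \<le> q+2 \<Longrightarrow> Vm j *v yy (q+3) (ee (X j) b) = b"
  using Dj[of j "ee (X j) b"] yy_ee_self[of j b] by (simp add: ee_def)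

lemma V_inj: "2 \<le> j \<Longrightarrow> j \<le> q+2 \<Longrightarrow> Vm j *v v = 0 \<Longrightarrow> v = 0"
  by (rule sq_surj_inj[of "Vm j"]) (use Vsig in blast)+

lemma P_surj:
  assumes j: "2 \<le> j" "j \<le> q+2"
  shows "\<exists>b. yy (q+3) (ee (X j) b) = w"
proof
  have "Vm j *v (yy (q+3) (ee (X j) (Vm j *v w)) - w) = 0"
    using Vsig[OF j] by (simp add: matrix_vector_mult_diff_distrib)
  then have "yy (q+3) (ee (X j) (Vm j *v w)) - w = 0" using V_inj[OF j] by blast
  then show "yy (q+3) (ee (X j) (Vm j *v w)) = w" by simp
qed

lemma U_inj:
  assumes i: "2 \<le> i" "i \<le> q+2" and v: "Um i *v v = 0"
  shows "v = 0"
proof (rule sq_surj_inj[of "Um i"])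
  fix w
  define k where "k = (if i = q+2 then 2 else q+2)"
  have k: "2 \<le> k" "k \<le> q+2" "k \<noteq> i" using i q2 unfolding k_def by auto
  obtain c where c: "Vm i *v c = - w"
    using Vsig[OF i] by blast
  obtain b where b: "yy (q+3) (ee (X k) b) = c" using P_surj[OF k(1,2)] by blast
  have "ee (X k) b (X i) = Um i *v yy i (ee (X k) b) + Vm i *v yy (q+3) (ee (X k) b)"
    by (rule Dj[OF i]) (use k in \<open>auto simp: ee_def\<close>)
  then have "0 = Um i *v yy i (ee (X k) b) - w" using k b c by (simp add: ee_def)
  then show "\<exists>v. Um i *v v = w" by (metis eq_iff_diff_eq_0)
qed (fact v)

lemma kernel:
  assumes i: "2 \<le> i" "i \<le> q+2" and x: "x (X i) = 0" "i = 2 \<or> i = 3 \<Longrightarrow> x S = 0"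
    "i = q+2 \<Longrightarrow> x (X 1) = 0" "yy (q+3) x = 0"
  shows "yy i x = 0"
  using Dj[OF i x(2,3)] x(1,4) U_inj[OF i] by simp


lemma ee_diff_ker:
  assumes i: "2 \<le> i" "i \<le> q+2" and x: "x (X i) = x' (X i)" "i = 2 \<or> i = 3 \<Longrightarrow> x S = x' S"
    "i = q+2 \<Longrightarrow> x (X 1) = x' (X 1)" "yy (q+3) x = yy (q+3) x'"
  shows "yy i x = yy i x'"
proof -
  have "yy i (\<lambda>n. x n - x' n) = 0"
    by (rule kernel[OF i]) (use x in \<open>auto simp: ye_diff\<close>)
  then show ?thesis by (simp add: ye_diff)
qed

lemma charclaim:
  assumes i: "2 \<le> i" "i \<le> q+2" and j: "2 \<le> j" "j \<le> q+2" "i \<noteq> j"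
  shows "Wm i *v yy i (ee (X j) b) = 0"
proof -
  define I where "I = {2..q+2}"
  define w where "w = yy (q+3) (ee (X j) b)"
  define bk where "bk k = (if k = j then b else SOME c. yy (q+3) (ee (X k) c) = w)" for k
  have bk: "yy (q+3) (ee (X k) (bk k)) = w" if "k \<in> I" for k
  proof (cases "k = j")
    case True then show ?thesis by (simp add: bk_def w_def)
  next
    case False
    have "\<exists>c. yy (q+3) (ee (X k) c) = w" using P_surj that unfolding I_def by auto
    then have "yy (q+3) (ee (X k) (SOME c. yy (q+3) (ee (X k) c) = w)) = w" by (rule someI_ex)
    then show ?thesis using False unfolding bk_def by simp
  qed
  define G where "G i k = Wm i *v yy i (ee (X k) (bk k))" for i k
  have Gii: "G k k = 0" if "k \<in> I" for k
    using that yy_ee_self unfolding G_def I_def by simp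
  have Gsame: "G i k = G i l" if "i \<in> I" "k \<in> I" "l \<in> I" "k \<noteq> i" "l \<noteq> i" for i k l
  proof -
    have "yy i (ee (X k) (bk k)) = yy i (ee (X l) (bk l))"
      by (rule ee_diff_ker) (use that bk in \<open>auto simp: I_def ee_def\<close>)
    then show ?thesis unfolding G_def by simp
  qed
  have Gsum: "(\<Sum>i\<in>I. G i k) = 0" if k: "k \<in> I" for k
  proof -
    have "ee (X k) (bk k) (X 1) = (\<Sum>i\<in>{1..q+2}. Wm i *v yy i (ee (X k) (bk k)))"
      by (rule D0)
    also have "{1..q+2} = insert 1 I" unfolding I_def by auto
    also have "(\<Sum>i\<in>insert 1 I. Wm i *v yy i (ee (X k) (bk k))) =
       Wm 1 *v yy 1 (ee (X k) (bk k)) + (\<Sum>i\<in>I. G i k)"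
      by (subst sum.insert) (auto simp: I_def G_def)
    also have "yy 1 (ee (X k) (bk k)) = yy 1 (\<lambda>n. 0)"
      by (rule ye_feed) (use k feeders(5)[of k q] in \<open>auto simp: ee_def I_def\<close>)
    finally show ?thesis using k by (simp add: ye_zero ee_def I_def)
  qed
  define h where "h i = G i (if i = 2 then 3 else 2)" for i
  have Gh: "G i k = h i" if "i \<in> I" "k \<in> I" "k \<noteq> i" for i k
    unfolding h_def by (rule Gsame) (use that q2 in \<open>auto simp: I_def\<close>)
  have hs: "(\<Sum>i\<in>I-{k}. h i) = 0" if "k \<in> I" for k
  proof -
    have "0 = (\<Sum>i\<in>I. G i k)" using Gsum[OF that] by simp
    also have "\<dots> = G k k + (\<Sum>i\<in>I-{k}. G i k)"
      by (rule sum.remove) (use that in \<open>auto simp: I_def\<close>)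
    also have "\<dots> = (\<Sum>i\<in>I-{k}. h i)"
      using Gii[OF that] Gh that by (auto intro!: sum.cong)
    finally show ?thesis by simp
  qed
  have h0: "h k = 0" if "k \<in> I" for k
  proof -
    have "h k $ c = 0" for c
    proof (rule char_arg[where I = I and q = q and \<eta> = "\<lambda>i. h i $ c"])
      show "finite I" unfolding I_def by simp
      show "card I = Suc q" unfolding I_def by simp
      show "of_nat q \<noteq> (0::'a)" by (rule charq)
      show "(\<Sum>i\<in>I - {k}. h i $ c) = 0" if "k \<in> I" for k
        using hs[OF that] by (metis sum_component zero_index)
    qed (fact that)
    then show ?thesis by (simp add: vec_eq_iff)
  qed
  have "G i j = h i" using Gh[of i j] i j unfolding I_def by simp
  then have "G i j = 0" using h0[of i] i unfolding I_def by simp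
  then show ?thesis unfolding G_def bk_def by simp
qed

lemma general:
  assumes i: "2 \<le> i" "i \<le> q+2" and x: "i = 2 \<or> i = 3 \<Longrightarrow> x S = 0"
    "i = q+2 \<Longrightarrow> x (X 1) = 0"
  shows "Wm i *v yy i x = 0"
proof -
  define x'' where "x'' = (\<lambda>n. if n = X i then 0 else x n)"
  have e1: "yy i x = yy i x''"
    by (rule ye_feed) (use feeders(1)[OF i(1), of q] in \<open>auto simp: x''_def\<close>)
  define k where "k = (if i = q+2 then 2 else q+2)"
  have k: "2 \<le> k" "k \<le> q+2" "k \<noteq> i" using i q2 unfolding k_def by auto
  obtain c where c: "yy (q+3) (ee (X k) c) = yy (q+3) x''" using P_surj[OF k(1,2)] by blast
  have "yy i x'' = yy i (ee (X k) c)"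
    by (rule ee_diff_ker[OF i]) (use k x c in \<open>auto simp: x''_def ee_def\<close>)
  then show ?thesis using e1 charclaim[OF i k(1,2)] k(3) by simp
qed

lemma final: "s_coeff_e1 K A = 0"
proof -
  have W1: "Wm 1 *v yy 1 (ee (X 1) b) = b" for b
  proof -
    have "b = ee (X 1) b (X 1)" by (simp add: ee_def)
    also have "\<dots> = (\<Sum>i\<in>{1..q+2}. Wm i *v yy i (ee (X 1) b))" by (rule D0)
    also have "{1..q+2} = insert 1 {2..q+2}" by auto
    also have "(\<Sum>i\<in>insert 1 {2..q+2}. Wm i *v yy i (ee (X 1) b)) =
       Wm 1 *v yy 1 (ee (X 1) b) + (\<Sum>i\<in>{2..q+2}. Wm i *v yy i (ee (X 1) b))"
      by (subst sum.insert) auto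
    also have "(\<Sum>i\<in>{2..q+2}. Wm i *v yy i (ee (X 1) b)) = 0"
    proof (rule sum.neutral, rule ballI)
      fix i assume i: "i \<in> {2..q+2}"
      show "Wm i *v yy i (ee (X 1) b) = 0"
      proof (cases "i = q+2")
        case True
        have "yy i (ee (X 1) b) = yy i (\<lambda>n. 0)"
          by (rule ye_feed) (use True feeders(4)[of q] in \<open>auto simp: ee_def\<close>)
        then show ?thesis by (simp add: ye_zero)
      next
        case False
        then show ?thesis using i by (intro general) (auto simp: ee_def)
      qed
    qed
    finally show ?thesis by simp
  qed
  have W1inj: "Wm 1 *v v = 0 \<Longrightarrow> v = 0" for v
    by (rule sq_surj_inj[of "Wm 1"]) (use W1 in blast)+
  have sc: "yy 1 (ee S a) = s_coeff_e1 K A *v a" for a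
    unfolding ye_def in_M1 s_coeff_e1_def by (simp add: ee_def matrix_vector_mul_assoc)
  have "Wm 1 *v yy 1 (ee S a) = 0" for a
  proof -
    have "0 = ee S a (X 1)" by (simp add: ee_def)
    also have "\<dots> = (\<Sum>i\<in>{1..q+2}. Wm i *v yy i (ee S a))" by (rule D0)
    also have "{1..q+2} = insert 1 {2..q+2}" by auto
    also have "(\<Sum>i\<in>insert 1 {2..q+2}. Wm i *v yy i (ee S a)) =
       Wm 1 *v yy 1 (ee S a) + (\<Sum>i\<in>{2..q+2}. Wm i *v yy i (ee S a))"
      by (subst sum.insert) auto
    also have "(\<Sum>i\<in>{2..q+2}. Wm i *v yy i (ee S a)) = 0"
    proof (rule sum.neutral, rule ballI)
      fix i assume i: "i \<in> {2..q+2}"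
      show "Wm i *v yy i (ee S a) = 0"
      proof (cases "i = 2 \<or> i = 3")
        case True
        have "yy i (ee S a) = yy i (\<lambda>n. 0)"
          by (rule ye_feed) (use True feeders(2,3)[of q] in \<open>auto simp: ee_def\<close>)
        then show ?thesis by (simp add: ye_zero)
      next
        case False
        then show ?thesis using i by (intro general) (auto simp: ee_def)
      qed
    qed
    finally show ?thesis by simp
  qed
  then have "s_coeff_e1 K A *v a = 0" for a using W1inj sc by metis
  then show ?thesis by (simp add: matrix_eq)
qed

end

theorem lemma2:
  fixes q p :: nat
    and K :: "edge \<Rightarrow> 'a::{finite,field}^'n::finite^'n"
    and A :: "edge \<Rightarrow> edge \<Rightarrow> 'a^'n^'n"
    and B :: "node \<Rightarrow> node \<Rightarrow> edge \<Rightarrow> 'a^'n^'n"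
  assumes "q \<ge> 2"
    and "prime p"
    and "\<not> p dvd q"
    and "CHAR('a) = p"
    and "is_VLNC_solution q K A B"
  shows "s_coeff_e1 K A = 0"
proof -
  have "of_nat q \<noteq> (0::'a)" using assms(3,4) by (simp add: of_nat_eq_0_iff_char_dvd)
  then show ?thesis using final assms(1,5) by blast
qed

end
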